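(* Let $p\in(0,+\infty]$ and $f\in H^p(\mathbb{B})$. Then the regular conjugate $f^c$ belongs to $H^p(\mathbb{B})$.
   Context: $\mathbb{H}$ denotes the quaternions; $\mathbb{S}=\{q\in\mathbb{H}: q^2=-1\}$; for $I\in\mathbb{S}$, $L_I=\mathbb{R}+\mathbb{R}I$; $\mathbb{B}=\{q\in\mathbb{H}:|q|<1\}$; $\mathbb{B}_I=\mathbb{B}\cap L_I$; $e^{I\theta}=\cos\theta+I\sin\theta$. A function $f:\mathbb{B}\to\mathbb{H}$ is (slice) regular if for every $I\in\mathbb{S}$ its restriction $f_I=f|_{\mathbb{B}_I}$ has continuous partial derivatives and satisfies $\frac12(\partial_x+I\partial_y)f_I(x+yI)=0$ on $\mathbb{B}_I$; equivalently, $f(q)=\sum_{n\ge0}q^na_n$ with $a_n\in\mathbb{H}$, convergent on $\mathbb{B}$. The regular conjugate of $f=\sum q^na_n$ is $f^c(q)=\sum_{n\ge0}q^n\overline{a_n}$. Hardy norms: for $p\in(0,\infty)$, $M_p(f_I,r)=\left(\frac{1}{2\pi}\int_{-\pi}^{\pi}|f(re^{I\theta})|^pd\theta\right)^{1/p}$, $\|f_I\|_p=\lim_{r\to1^-}M_p(f_I,r)$, $\|f\|_p=\sup_{I\in\mathbb{S}}\|f_I\|_p$; $\|f\|_\infty=\sup_{q\in\mathbb{B}}|f(q)|$. $H^p(\mathbb{B})=\{f\text{ regular}: \|f\|_p<+\infty\}$. *)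

theory Defs
  imports "HOL-Analysis.Analysis"
begin

text \<open>Quaternions via the Cayley--Dickson construction: q = a + b j with a, b complex
  (a = x0 + x1 i, b = x2 + x3 i, so q = x0 + x1 i + x2 j + x3 k).
  The product-type norm sqrt(|a|^2+|b|^2) is the Euclidean norm |q|, and the
  product topology is the usual topology of H = R^4.\<close>

type_synonym quat = "complex \<times> complex"

definition qmult :: "quat \<Rightarrow> quat \<Rightarrow> quat" where
  "qmult p q = (fst p * fst q - cnj (snd q) * snd p, snd q * fst p + snd p * cnj (fst q))"

definition qone :: quat where "qone = (1, 0)"

fun qpow :: "quat \<Rightarrow> nat \<Rightarrow> quat" where
  "qpow q 0 = qone"
| "qpow q (Suc n) = qmult (qpow q n) q"

definition qconj :: "quat \<Rightarrow> quat" where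
  "qconj q = (cnj (fst q), - snd q)"

definition qS :: "quat set" where
  "qS = {q. qmult q q = - qone}"

definition qB :: "quat set" where
  "qB = {q. norm q < 1}"

definition qexpI :: "quat \<Rightarrow> real \<Rightarrow> quat" where
  "qexpI I \<theta> = cos \<theta> *\<^sub>R qone + sin \<theta> *\<^sub>R I"

definition has_coeffs :: "(quat \<Rightarrow> quat) \<Rightarrow> (nat \<Rightarrow> quat) \<Rightarrow> bool" where
  "has_coeffs f a \<longleftrightarrow> (\<forall>q\<in>qB. (\<lambda>n. qmult (qpow q n) (a n)) sums f q)"

text \<open>Slice regular functions on B (power series characterisation).\<close>
definition slice_regular :: "(quat \<Rightarrow> quat) \<Rightarrow> bool" where
  "slice_regular f \<longleftrightarrow> (\<exists>a. has_coeffs f a)"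

text \<open>Regular conjugate f^c(q) = sum q^n conj(a_n), where f = sum q^n a_n
  (the coefficients are uniquely determined by f).\<close>
definition regular_conj :: "(quat \<Rightarrow> quat) \<Rightarrow> quat \<Rightarrow> quat" where
  "regular_conj f = (let a = (SOME a. has_coeffs f a) in
     (\<lambda>q. \<Sum>n. qmult (qpow q n) (qconj (a n))))"

definition Mp :: "real \<Rightarrow> (quat \<Rightarrow> quat) \<Rightarrow> quat \<Rightarrow> real \<Rightarrow> real" where
  "Mp p f I r = ((1 / (2 * pi)) *
      (LBINT \<theta>=-pi..pi. norm (f (r *\<^sub>R qexpI I \<theta>)) powr p)) powr (1 / p)"

definition hardy_norm :: "ereal \<Rightarrow> (quat \<Rightarrow> quat) \<Rightarrow> ereal" where
  "hardy_norm p f =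
     (if p = \<infinity> then (SUP q\<in>qB. ereal (norm (f q)))
      else (SUP I\<in>qS. Lim (at_left (1::real)) (\<lambda>r. ereal (Mp (real_of_ereal p) f I r))))"

definition hardy_space :: "ereal \<Rightarrow> (quat \<Rightarrow> quat) set" where
  "hardy_space p = {f. slice_regular f \<and> hardy_norm p f < \<infinity>}"

end

theory Submission
  imports Defs "HOL-Complex_Analysis.Complex_Analysis"
begin


lemma qmult_simps [simp]:
  "fst (qmult p q) = fst p * fst q - cnj (snd q) * snd p"
  "snd (qmult p q) = snd q * fst p + snd p * cnj (fst q)"
  by (simp_all add: qmult_def)

lemma qmult_assoc: "qmult (qmult x y) z = qmult x (qmult y z)"
  by (simp add: prod_eq_iff algebra_simps)

lemma qmult_one [simp]: "qmult qone x = x" "qmult x qone = x"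
  by (simp_all add: prod_eq_iff qone_def)

lemma qconj_simps [simp]: "fst (qconj x) = cnj (fst x)" "snd (qconj x) = - snd x"
  by (simp_all add: qconj_def)

lemma qconj_qconj [simp]: "qconj (qconj x) = x" by (simp add: prod_eq_iff)

lemma qconj_mult: "qconj (qmult x y) = qmult (qconj y) (qconj x)"
  by (simp add: prod_eq_iff algebra_simps)

lemma norm_sq_quat: "(norm (x::quat))^2 = (cmod (fst x))^2 + (cmod (snd x))^2"
  by (cases x) (simp add: norm_Pair)

lemma norm4: "norm (x::quat) * norm x = Re (fst x) * Re (fst x) + Im (fst x) * Im (fst x) + Re (snd x) * Re (snd x) + Im (snd x) * Im (snd x)"
  by (metis norm_sq_quat cmod_power2 power2_eq_square add.assoc)

lemma qmult_conj_self: "qmult x (qconj x) = (norm x)^2 *\<^sub>R qone"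
  by (simp add: prod_eq_iff qone_def complex_eq_iff power2_eq_square norm4 algebra_simps)

lemma qmult_conj_self2: "qmult (qconj x) x = (norm x)^2 *\<^sub>R qone"
  by (simp add: prod_eq_iff qone_def complex_eq_iff power2_eq_square norm4 algebra_simps)

lemma norm_qmult: "norm (qmult x y) = norm x * norm y"
proof -
  have "norm (qmult x y) * norm (qmult x y) = (norm x * norm x) * (norm y * norm y)"
    unfolding norm4 by (simp add: algebra_simps)
  then have "(norm (qmult x y))^2 = (norm x * norm y)^2"
    by (simp add: power2_eq_square algebra_simps)
  then show ?thesis by (simp add: power2_eq_iff_nonneg)
qed



lemma qmult_scaleR [simp]: "qmult (c *\<^sub>R x) y = c *\<^sub>R qmult x y" "qmult x (c *\<^sub>R y) = c *\<^sub>R qmult x y"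
  by (simp_all add: prod_eq_iff algebra_simps scaleR_conv_of_real)

lemma qmult_add [simp]: "qmult (x + y) z = qmult x z + qmult y z" "qmult x (y + z) = qmult x y + qmult x z"
  by (simp_all add: prod_eq_iff algebra_simps)

lemma qmult_minus [simp]: "qmult (- x) y = - qmult x y" "qmult x (- y) = - qmult x y"
  by (simp_all add: prod_eq_iff algebra_simps)

lemma qmult_zero [simp]: "qmult 0 y = 0" "qmult x 0 = 0"
  by (simp_all add: prod_eq_iff)

lemma qconj_scaleR [simp]: "qconj (c *\<^sub>R x) = c *\<^sub>R qconj x"
  by (simp add: prod_eq_iff scaleR_conv_of_real)

lemma qconj_add [simp]: "qconj (x + y) = qconj x + qconj y"
  by (simp add: prod_eq_iff)

lemma qconj_qone [simp]: "qconj qone = qone" by (simp add: prod_eq_iff qone_def)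

lemma norm_qconj [simp]: "norm (qconj x) = norm x"
  by (cases x) (simp add: qconj_def norm_Pair)

lemma bounded_linear_qmult_left: "bounded_linear (\<lambda>x. qmult a x)"
  by (rule bounded_linear_intro[where K="norm a"]) (auto simp: norm_qmult)

lemma bounded_linear_qmult_right: "bounded_linear (\<lambda>x. qmult x a)"
  by (rule bounded_linear_intro[where K="norm a"]) (auto simp: norm_qmult mult.commute)

definition qphi :: "quat \<Rightarrow> quat \<Rightarrow> quat" where
  "qphi u x = qmult (qmult u x) (qconj u)"

lemma unit_conj_mult: "norm u = 1 \<Longrightarrow> qmult (qconj u) u = qone" "norm u = 1 \<Longrightarrow> qmult u (qconj u) = qone"
  by (simp_all add: qmult_conj_self qmult_conj_self2)

lemma qphi_mult: "norm u = 1 \<Longrightarrow> qphi u (qmult x y) = qmult (qphi u x) (qphi u y)"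
proof -
  assume u: "norm u = 1"
  have "qmult (qphi u x) (qphi u y) = qmult (qmult u x) (qmult (qmult (qconj u) u) (qmult y (qconj u)))"
    unfolding qphi_def by (simp add: qmult_assoc)
  also have "\<dots> = qphi u (qmult x y)" using u by (simp add: unit_conj_mult qphi_def qmult_assoc)
  finally show ?thesis by simp
qed

lemma qphi_one: "norm u = 1 \<Longrightarrow> qphi u qone = qone"
  by (simp add: qphi_def unit_conj_mult)

lemma qphi_pow: "norm u = 1 \<Longrightarrow> qphi u (qpow x n) = qpow (qphi u x) n"
  by (induction n) (simp_all add: qphi_one qphi_mult)

lemma qphi_conj: "qphi u (qconj x) = qconj (qphi u x)"
  by (simp add: qphi_def qconj_mult qmult_assoc)

lemma norm_qphi: "norm u = 1 \<Longrightarrow> norm (qphi u x) = norm x"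
  by (simp add: qphi_def norm_qmult)

lemma qphi_inv: "norm u = 1 \<Longrightarrow> qphi (qconj u) (qphi u x) = x"
  by (simp add: qphi_def qmult_assoc unit_conj_mult) (simp add: qmult_assoc[symmetric] unit_conj_mult)

lemma qphi_inv': "norm u = 1 \<Longrightarrow> qphi u (qphi (qconj u) x) = x"
  using qphi_inv[of "qconj u" x] by simp

lemma bounded_linear_qphi: "bounded_linear (qphi u)"
  unfolding qphi_def
  using bounded_linear_compose[OF bounded_linear_qmult_right bounded_linear_qmult_left] by blast

lemma qphi_scaleR [simp]: "qphi u (c *\<^sub>R x) = c *\<^sub>R qphi u x"
  by (simp add: qphi_def)

lemma qphi_add [simp]: "qphi u (x + y) = qphi u x + qphi u y"
  by (simp add: qphi_def)

definition qi :: quat where "qi = (\<i>, 0)"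

lemma pure_unit_sq:
  assumes "Re (fst I) = 0" "norm I = 1"
  shows "qmult I I = - qone"
proof -
  have n: "Re (fst I) * Re (fst I) + Im (fst I) * Im (fst I) + Re (snd I) * Re (snd I) + Im (snd I) * Im (snd I) = 1"
    using assms(2) norm4[of I] by simp
  show ?thesis using assms(1) n
    by (simp add: prod_eq_iff qone_def complex_eq_iff algebra_simps)
qed

lemma pure_unit_rot:
  assumes "Re (fst I) = 0" "norm I = 1"
  shows "\<exists>u. norm u = 1 \<and> qphi u I = qi"
proof (cases "I = - qi")
  case True
  let ?u = "(0, 1) :: quat"
  have "qphi ?u I = qi" using True by (simp add: qphi_def qi_def prod_eq_iff)
  moreover have "norm ?u = 1" by (simp add: norm_Pair)
  ultimately show ?thesis by blast
next
  case False
  define u0 where "u0 = qi + I"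
  have n: "Re (fst I) * Re (fst I) + Im (fst I) * Im (fst I) + Re (snd I) * Re (snd I) + Im (snd I) * Im (snd I) = 1"
    using assms(2) norm4[of I] by simp
  have comm: "qmult u0 I = qmult qi u0"
    using assms(1) n by (simp add: u0_def qi_def prod_eq_iff complex_eq_iff algebra_simps)
  have u0nz: "u0 \<noteq> 0" using False unfolding u0_def by (metis add.commute add_eq_0_iff)
  then have pos: "norm u0 > 0" by simp
  define u where "u = (1 / norm u0) *\<^sub>R u0"
  have nu: "norm u = 1" using pos by (simp add: u_def)
  have "qphi u I = (1 / norm u0)^2 *\<^sub>R qmult (qmult u0 I) (qconj u0)"
    by (simp add: u_def qphi_def power2_eq_square)
  also have "\<dots> = (1 / norm u0)^2 *\<^sub>R qmult qi (qmult u0 (qconj u0))"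
    by (simp add: comm qmult_assoc)
  also have "\<dots> = qi" using pos by (simp add: qmult_conj_self field_simps)
  finally show ?thesis using nu by blast
qed

lemma qS_pure_unit:
  assumes "I \<in> qS" shows "Re (fst I) = 0" "norm I = 1"
proof -
  obtain a b where I: "I = (a, b)" by (cases I)
  have e1: "a * a - cnj b * b = -1" and e2: "b * a + b * cnj a = 0"
    using assms by (auto simp: qS_def I qmult_def qone_def)
  have ra: "Re a = 0"
  proof (cases "b = 0")
    case True
    then have "a * a = -1" using e1 by simp
    then have "Re (a*a) = -1" "Im (a*a) = 0" by simp_all
    then have h1: "Re a * Re a - Im a * Im a = -1" and h2: "Re a * Im a = 0"
      by (simp_all add: algebra_simps)
    show ?thesis
    proof (rule ccontr)
      assume "Re a \<noteq> 0"
      then have "Im a = 0" using h2 by simp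
      then have "Re a * Re a = -1" using h1 by simp
      moreover have "Re a * Re a \<ge> 0" by simp
      ultimately show False by linarith
    qed
  next
    case False
    have "b * (a + cnj a) = 0" using e2 by (simp add: algebra_simps)
    then have "a + cnj a = 0" using False by simp
    then show ?thesis by (simp add: complex_eq_iff)
  qed
  show "Re (fst I) = 0" using ra I by simp
  have "Re (a * a - cnj b * b) = -1" using e1 by simp
  then have "Im a * Im a + Re b * Re b + Im b * Im b = 1" using ra by (simp add: algebra_simps)
  then have "norm I * norm I = 1" using ra I norm4[of I] by simp
  then have "(norm I - 1) * (norm I + 1) = 0" by (simp add: algebra_simps)
  moreover have "norm I + 1 > 0" by (simp add: add_nonneg_pos)
  ultimately show "norm I = 1" by simp
qed


lemma sums_Pair2: "x sums a \<Longrightarrow> y sums b \<Longrightarrow> (\<lambda>n. (x n, y n)) sums (a, b)"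
proof -
  assume "x sums a" "y sums b"
  then have "(\<lambda>n. ((\<Sum>i<n. x i), (\<Sum>i<n. y i))) \<longlonglongrightarrow> (a, b)"
    unfolding sums_def by (intro tendsto_Pair)
  moreover have "\<And>n. (\<Sum>i<n. (x i, y i)) = ((\<Sum>i<n. x i), (\<Sum>i<n. y i))"
    by (simp add: prod_eq_iff fst_sum snd_sum)
  ultimately show ?thesis unfolding sums_def by simp
qed

lemma quat_to_complex:
  "\<exists>u w. norm u = 1 \<and> qphi u q = (w, 0)"
proof -
  obtain c d where q: "q = (c, d)" by (cases q)
  define v :: quat where "v = (\<i> * of_real (Im c), d)"
  have qv: "q = Re c *\<^sub>R qone + v"
    by (simp add: q v_def qone_def prod_eq_iff complex_eq_iff)
  show ?thesis
  proof (cases "v = 0")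
    case True
    then have "q = (c, 0)" using qv by (simp add: q v_def prod_eq_iff complex_eq_iff)
    moreover have "qphi qone q = q" by (simp add: qphi_def)
    moreover have "norm qone = 1" by (simp add: qone_def norm_Pair)
    ultimately show ?thesis by metis
  next
    case False
    then have pos: "norm v > 0" by simp
    define I where "I = (1 / norm v) *\<^sub>R v"
    have "Re (fst I) = 0" by (simp add: I_def v_def)
    moreover have "norm I = 1" using pos by (simp add: I_def)
    ultimately obtain u where u: "norm u = 1" "qphi u I = qi" using pure_unit_rot by blast
    have vI: "v = norm v *\<^sub>R I" using pos by (simp add: I_def)
    have "qphi u q = Re c *\<^sub>R qphi u qone + norm v *\<^sub>R qphi u I"
      by (subst qv, subst vI) simp
    also have "\<dots> = (of_real (Re c) + \<i> * of_real (norm v), 0)"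
      using u by (simp add: qphi_one) (simp add: qone_def qi_def prod_eq_iff scaleR_conv_of_real)
    finally show ?thesis using u by blast
  qed
qed

lemma qpow_complex: "qpow (w, 0) n = (w ^ n, 0)"
  by (induction n) (simp_all add: qone_def prod_eq_iff)

lemma qmult_complex: "qmult (w, 0) b = (w * fst b, snd b * w)"
  by (simp add: prod_eq_iff)

locale slice_rep =
  fixes f :: "quat \<Rightarrow> quat" and a :: "nat \<Rightarrow> quat" and u :: quat
  assumes coeffs: "has_coeffs f a" and unit: "norm u = 1"
begin

definition al where "al n = fst (qphi u (a n))"
definition be where "be n = snd (qphi u (a n))"
definition FF where "FF w = (\<Sum>n. al n * w ^ n)"
definition GG where "GG w = (\<Sum>n. be n * w ^ n)"
definition pt where "pt w = qphi (qconj u) (w, 0)"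

lemma norm_pt: "norm (pt w) = cmod w"
  using unit by (simp add: pt_def norm_qphi norm_Pair)

lemma term_eq: "qphi u (qmult (qpow (pt w) n) b) = (w ^ n * fst (qphi u b), snd (qphi u b) * w ^ n)"
  using unit by (simp add: pt_def qphi_mult qphi_pow qphi_inv' qpow_complex qmult_complex)

lemma sums_main:
  assumes "cmod w < 1"
  shows "(\<lambda>n. al n * w ^ n) sums FF w" "(\<lambda>n. be n * w ^ n) sums GG w"
    and "qphi u (f (pt w)) = (FF w, GG w)"
proof -
  have "pt w \<in> qB" using assms by (simp add: qB_def norm_pt)
  then have "(\<lambda>n. qmult (qpow (pt w) n) (a n)) sums f (pt w)"
    using coeffs by (simp add: has_coeffs_def)
  from bounded_linear.sums[OF bounded_linear_qphi this, of u]
  have S: "(\<lambda>n. (w ^ n * al n, be n * w ^ n)) sums qphi u (f (pt w))"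
    by (simp add: term_eq al_def be_def)
  from bounded_linear.sums[OF bounded_linear_fst S] have s1: "(\<lambda>n. al n * w ^ n) sums fst (qphi u (f (pt w)))"
    by (simp add: mult.commute)
  from bounded_linear.sums[OF bounded_linear_snd S] have s2: "(\<lambda>n. be n * w ^ n) sums snd (qphi u (f (pt w)))"
    by simp
  show "(\<lambda>n. al n * w ^ n) sums FF w" using s1 by (simp add: FF_def sums_iff)
  show "(\<lambda>n. be n * w ^ n) sums GG w" using s2 by (simp add: GG_def sums_iff)
  show "qphi u (f (pt w)) = (FF w, GG w)" using s1 s2 by (simp add: FF_def GG_def sums_iff prod_eq_iff)
qed

lemma norm_f: "cmod w < 1 \<Longrightarrow> norm (f (pt w)) = norm (FF w, GG w)"
  using sums_main(3)[of w] unit by (metis norm_qphi)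

lemma conj_sums:
  assumes "cmod w < 1"
  shows "(\<lambda>n. qmult (qpow (pt w) n) (qconj (a n))) sums qphi (qconj u) (cnj (FF (cnj w)), - GG w)"
proof -
  have "(\<lambda>n. al n * (cnj w) ^ n) sums FF (cnj w)" using assms sums_main(1)[of "cnj w"] by simp
  then have s1: "(\<lambda>n. w ^ n * cnj (al n)) sums cnj (FF (cnj w))"
    by (subst sums_cnj[symmetric]) (simp add: mult.commute)
  have s2: "(\<lambda>n. - (be n * w ^ n)) sums (- GG w)" using sums_main(2)[OF assms] by (rule sums_minus)
  have S: "(\<lambda>n. (w ^ n * cnj (al n), - (be n * w ^ n))) sums (cnj (FF (cnj w)), - GG w)"
    by (rule sums_Pair2[OF s1 s2])
  have eq: "qmult (qpow (pt w) n) (qconj (a n)) = qphi (qconj u) (w ^ n * cnj (al n), - (be n * w ^ n))" for n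
  proof -
    have "qphi u (qmult (qpow (pt w) n) (qconj (a n))) = (w ^ n * cnj (al n), - (be n * w ^ n))"
      by (simp add: term_eq qphi_conj al_def be_def)
    then show ?thesis using unit by (metis qphi_inv)
  qed
  show ?thesis unfolding eq by (rule bounded_linear.sums[OF bounded_linear_qphi S])
qed

lemma norm_fc:
  assumes "cmod w < 1"
  shows "norm (\<Sum>n. qmult (qpow (pt w) n) (qconj (a n))) = norm (FF (cnj w), GG w)"
proof -
  have "norm (\<Sum>n. qmult (qpow (pt w) n) (qconj (a n))) = norm (qphi (qconj u) (cnj (FF (cnj w)), - GG w))"
    using conj_sums[OF assms] by (simp add: sums_iff)
  also have "\<dots> = norm (FF (cnj w), GG w)" using unit by (simp add: norm_qphi norm_Pair)
  finally show ?thesis .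
qed

end


lemma integral_strict_less:
  fixes g :: "real \<Rightarrow> real"
  assumes cont: "continuous_on {a..b} g" and ab: "a < b"
    and le: "\<And>x. x \<in> {a..b} \<Longrightarrow> g x \<le> m" and x0: "x0 \<in> {a..b}" "g x0 < m"
  shows "integral {a..b} g < (b - a) * m"
proof -
  have int: "g integrable_on {a..b}" using cont by (rule integrable_continuous_real)
  have "integral {a..b} g \<le> integral {a..b} (\<lambda>_. m)"
    using int le by (intro integral_le) auto
  also have "\<dots> = (b - a) * m" using ab by simp
  finally have 1: "integral {a..b} g \<le> (b - a) * m" .
  have "integral {a..b} g \<noteq> (b - a) * m"
  proof
    assume eq: "integral {a..b} g = (b - a) * m"
    have "((\<lambda>x. m - g x) has_integral ((b - a) * m - integral {a..b} g)) {a..b}"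
      using has_integral_diff[OF has_integral_const_real[of m a b] integrable_integral[OF int]] ab by simp
    then have h0: "((\<lambda>x. m - g x) has_integral 0) (cbox a b)" using eq by simp
    have "m - g x0 = 0"
      by (rule has_integral_0_cbox_imp_0[OF _ _ h0]) 
         (use cont le x0 ab in \<open>auto intro!: continuous_intros simp: box_real\<close>)
    then show False using x0 by simp
  qed
  then show ?thesis using 1 by linarith
qed

lemma periodic_integral:
  fixes g :: "real \<Rightarrow> real"
  assumes cont: "continuous_on UNIV g" and per: "\<And>x. g (x + 2 * pi) = g x"
    and al: "0 \<le> \<alpha>" "\<alpha> \<le> 2 * pi"
  shows "integral {-pi..pi} (\<lambda>t. g (t + \<alpha>)) = integral {-pi..pi} g"
proof -
  have intg: "\<And>a b. g integrable_on {a..b}"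
    using cont by (intro integrable_continuous_real) (auto intro: continuous_on_subset)
  have "integral {-pi..pi} (\<lambda>t. g (t + \<alpha>)) = integral {-pi..pi} (g \<circ> (+) \<alpha>)"
    by (simp add: o_def add.commute)
  also have "\<dots> = integral {-pi+\<alpha>..pi+\<alpha>} g" by (simp add: integral_shift_Icc_real)
  also have "\<dots> = integral {-pi+\<alpha>..pi} g + integral {pi..pi+\<alpha>} g"
  proof -
    have "-pi+\<alpha> \<le> pi" "pi \<le> pi+\<alpha>" using al by auto
    from Henstock_Kurzweil_Integration.integral_combine[OF this intg] show ?thesis by simp
  qed
  also have "integral {pi..pi+\<alpha>} g = integral {-pi..-pi+\<alpha>} (g \<circ> (+) (2*pi))"
    by (simp add: integral_shift_Icc_real)
  also have "\<dots> = integral {-pi..-pi+\<alpha>} g"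
    by (simp add: o_def add.commute per)
  also have "integral {-pi+\<alpha>..pi} g + integral {-pi..-pi+\<alpha>} g = integral {-pi..pi} g"
  proof -
    have "-pi \<le> -pi+\<alpha>" "-pi+\<alpha> \<le> pi" using al by auto
    from Henstock_Kurzweil_Integration.integral_combine[OF this intg] show ?thesis by (simp add: add.commute)
  qed
  finally show ?thesis .
qed

definition Mean :: "(complex \<Rightarrow> real) \<Rightarrow> real \<Rightarrow> real" where
  "Mean u \<rho> = integral {-pi..pi} (\<lambda>t. u (of_real \<rho> * cis t))"

lemma rot_inv:
  assumes cont: "continuous_on (ball 0 1) u" and z: "cmod z < 1"
  shows "integral {-pi..pi} (\<lambda>t. u (cis t * z)) = Mean u (cmod z)"
proof (cases "z = 0")
  case True then show ?thesis by (simp add: Mean_def)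
next
  case False
  define \<alpha> where "\<alpha> = (if Arg z < 0 then Arg z + 2 * pi else Arg z)"
  have al: "0 \<le> \<alpha>" "\<alpha> \<le> 2 * pi" using Arg_bounded[of z] by (auto simp: \<alpha>_def)
  have zc: "z = of_real (cmod z) * cis \<alpha>"
    using rcis_cmod_Arg[of z] by (auto simp: \<alpha>_def rcis_def cis_def complex_eq_iff)
  define g where "g t = u (of_real (cmod z) * cis t)" for t
  have gc: "continuous_on UNIV g" unfolding g_def
    by (rule continuous_on_compose2[OF cont]) (auto intro!: continuous_intros simp: norm_mult z)
  have "cis (x + 2 * pi) = cis x" for x by (simp add: complex_eq_iff)
  then have per: "g (x + 2 * pi) = g x" for x by (simp add: g_def)
  have "integral {-pi..pi} (\<lambda>t. u (cis t * z)) = integral {-pi..pi} (\<lambda>t. g (t + \<alpha>))"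
    by (subst zc) (simp add: g_def cis_mult[symmetric] algebra_simps)
  also have "\<dots> = integral {-pi..pi} g" using periodic_integral[OF gc per al] .
  finally show ?thesis by (simp add: Mean_def g_def[abs_def])
qed


lemma cont_circle:
  assumes cont: "continuous_on (ball 0 1) u" and s: "s < 1"
  shows "continuous_on ({0..s} \<times> cbox (-pi) pi) (\<lambda>(x, t). u (of_real x * cis t))"
proof -
  have "continuous_on ({0..s} \<times> cbox (-pi) pi) (\<lambda>p. of_real (fst p) * cis (snd p))"
    by (intro continuous_intros)
  moreover have "(\<lambda>p. of_real (fst p) * cis (snd p)) ` ({0..s} \<times> cbox (-pi) pi) \<subseteq> ball 0 1"
    using s by (auto simp: norm_mult)
  ultimately have "continuous_on ({0..s} \<times> cbox (-pi) pi) (\<lambda>p. u (of_real (fst p) * cis (snd p)))"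
    by (rule continuous_on_compose2[OF cont])
  then show ?thesis by (simp add: case_prod_beta)
qed

lemma Mean_cont:
  assumes cont: "continuous_on (ball 0 1) u" and s: "s < 1"
  shows "continuous_on {0..s} (Mean u)"
proof -
  have "continuous_on {0..s} (\<lambda>x. integral (cbox (-pi) pi) (\<lambda>t. u (of_real x * cis t)))"
    using cont_circle[OF cont s] by (rule integral_continuous_on_param)
  then show ?thesis by (simp add: Mean_def[abs_def])
qed

lemma submean_mono:
  fixes u :: "complex \<Rightarrow> real"
  assumes cont: "continuous_on (ball 0 1) u"
    and sm: "\<And>s. s < 1 \<Longrightarrow> \<exists>\<delta>>0. \<forall>z c. cmod z \<le> s \<longrightarrow> cmod c < \<delta> \<longrightarrow>
               2 * pi * u z \<le> integral {-pi..pi} (\<lambda>\<sigma>. u (z + c * cis \<sigma>))"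
    and rs: "0 \<le> r" "r \<le> s" "s < 1"
  shows "Mean u r \<le> Mean u s"
proof -
  have Mc: "continuous_on {0..s} (Mean u)" using Mean_cont[OF cont rs(3)] .
  obtain x1 where x1: "x1 \<in> {0..s}" "\<And>y. y \<in> {0..s} \<Longrightarrow> Mean u y \<le> Mean u x1"
    using continuous_attains_sup[OF compact_Icc _ Mc] rs by fastforce
  define m where "m = Mean u x1"
  define T where "T = {0..s} \<inter> Mean u -` {m..}"
  have Tc: "closed T" unfolding T_def by (rule continuous_closed_preimage[OF Mc]) auto
  have Tne: "T \<noteq> {}" using x1 by (auto simp: T_def m_def)
  have Tb: "bdd_above T" by (auto simp: T_def bdd_above_def)
  define r0 where "r0 = Sup T"
  have r0T: "r0 \<in> T" unfolding r0_def by (rule closed_contains_Sup[OF Tne Tb Tc])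
  have r0m: "Mean u r0 = m" "0 \<le> r0" "r0 \<le> s" using r0T x1 by (auto simp: T_def m_def intro: antisym)
  have above: "Mean u x < m" if "x \<in> {0..s}" "r0 < x" for x
  proof (rule ccontr)
    assume "\<not> Mean u x < m"
    then have "x \<in> T" using that by (auto simp: T_def)
    then have "x \<le> r0" unfolding r0_def using Tb by (rule cSup_upper)
    then show False using that by simp
  qed
  show ?thesis
  proof (cases "r0 = s")
    case True
    then show ?thesis using x1(2)[of r] rs r0m by (simp add: m_def)
  next
    case False
    then have r0s: "r0 < s" using r0m by simp
    obtain \<delta> where \<delta>: "\<delta> > 0" "\<And>z c. cmod z \<le> s \<Longrightarrow> cmod c < \<delta> \<Longrightarrow>
               2 * pi * u z \<le> integral {-pi..pi} (\<lambda>\<sigma>. u (z + c * cis \<sigma>))"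
      using sm[OF rs(3)] by blast
    define \<rho> where "\<rho> = min (\<delta>/2) (s - r0)"
    have \<rho>: "\<rho> > 0" "\<rho> < \<delta>" "r0 + \<rho> \<le> s" using \<delta> r0s by (auto simp: \<rho>_def)
    define K where "K t \<sigma> = u (cis t * (of_real r0 + of_real \<rho> * cis \<sigma>))" for t \<sigma>
    have nK: "cmod (cis t * (of_real r0 + of_real \<rho> * cis \<sigma>)) \<le> s" for t \<sigma>
    proof -
      have "cmod (of_real r0 + of_real \<rho> * cis \<sigma>) \<le> cmod (of_real r0) + cmod (of_real \<rho> * cis \<sigma>)"
        by (rule norm_triangle_ineq)
      also have "\<dots> = r0 + \<rho>" using r0m \<rho> by (simp add: norm_mult)
      finally show ?thesis using \<rho> by (simp add: norm_mult)
    qed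
    have Kc: "continuous_on (cbox (-pi, -pi) (pi, pi)) (\<lambda>(t, \<sigma>). K t \<sigma>)"
    proof -
      have "continuous_on (cbox (-pi, -pi) (pi, pi)) (\<lambda>p. cis (fst p) * (of_real r0 + of_real \<rho> * cis (snd p)))"
        by (intro continuous_intros)
      moreover have "(\<lambda>p. cis (fst p) * (of_real r0 + of_real \<rho> * cis (snd p))) ` cbox (-pi, -pi) (pi, pi) \<subseteq> ball 0 1"
      proof (rule image_subsetI)
        fix p :: "real \<times> real"
        have "cmod (cis (fst p) * (of_real r0 + of_real \<rho> * cis (snd p))) < 1"
          using nK[of "fst p" "snd p"] rs(3) by linarith
        then show "cis (fst p) * (of_real r0 + of_real \<rho> * cis (snd p)) \<in> ball 0 1" by simp
      qed
      ultimately show ?thesis unfolding K_def case_prod_beta by (rule continuous_on_compose2[OF cont])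
    qed
    have Kc1: "continuous_on {-pi..pi} (\<lambda>t. integral (cbox (-pi) pi) (K t))"
    proof -
      have "continuous_on ({-pi..pi} \<times> cbox (-pi) pi) (\<lambda>(t, \<sigma>). K t \<sigma>)"
        using Kc by (simp add: cbox_Pair_eq)
      then show ?thesis by (rule integral_continuous_on_param)
    qed
    have pt: "2 * pi * u (of_real r0 * cis t) \<le> integral {-pi..pi} (K t)" for t
    proof -
      have "2 * pi * u (of_real r0 * cis t) \<le> integral {-pi..pi} (\<lambda>\<sigma>. u (of_real r0 * cis t + (of_real \<rho> * cis t) * cis \<sigma>))"
        using \<delta>(2)[of "of_real r0 * cis t" "of_real \<rho> * cis t"] \<rho> r0m rs by (simp add: norm_mult)
      also have "\<dots> = integral {-pi..pi} (K t)"
        by (rule integral_cong) (simp add: K_def algebra_simps)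
      finally show ?thesis .
    qed
    have c1: "continuous_on {-pi..pi} (\<lambda>t. 2 * pi * u (of_real r0 * cis t))"
    proof -
      have "continuous_on {-pi..pi} (\<lambda>t. u (of_real r0 * cis t))"
        using r0m rs(3)
        by (rule_tac continuous_on_compose2[OF cont]) (auto intro!: continuous_intros simp: norm_mult)
      then show ?thesis by (intro continuous_intros)
    qed
    have "2 * pi * Mean u r0 = integral {-pi..pi} (\<lambda>t. 2 * pi * u (of_real r0 * cis t))"
      by (simp add: Mean_def)
    also have "\<dots> \<le> integral {-pi..pi} (\<lambda>t. integral {-pi..pi} (K t))"
      by (rule integral_le) (use pt integrable_continuous_real[OF c1] integrable_continuous_real[OF Kc1] in auto)
    also have "\<dots> = integral {-pi..pi} (\<lambda>\<sigma>. integral {-pi..pi} (\<lambda>t. K t \<sigma>))"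
      using integral_swap_continuous[OF Kc] by simp
    also have "\<dots> = integral {-pi..pi} (\<lambda>\<sigma>. Mean u (cmod (of_real r0 + of_real \<rho> * cis \<sigma>)))"
      unfolding K_def using nK rs(3)
      by (intro integral_cong rot_inv[OF cont]) (use nK[of 0] in \<open>auto intro: le_less_trans\<close>)
    finally have ineq: "2 * pi * m \<le> integral {-pi..pi} (\<lambda>\<sigma>. Mean u (cmod (of_real r0 + of_real \<rho> * cis \<sigma>)))"
      using r0m by simp
    have nK2: "cmod (of_real r0 + of_real \<rho> * cis \<sigma>) \<in> {0..s}" for \<sigma>
      using nK[of 0 \<sigma>] by simp
    have gc: "continuous_on {-pi..pi} (\<lambda>\<sigma>. Mean u (cmod (of_real r0 + of_real \<rho> * cis \<sigma>)))"
      by (rule continuous_on_compose2[OF Mc]) (use nK2 in \<open>auto intro!: continuous_intros\<close>)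
    have "integral {-pi..pi} (\<lambda>\<sigma>. Mean u (cmod (of_real r0 + of_real \<rho> * cis \<sigma>))) < (pi - - pi) * m"
    proof (rule integral_strict_less[OF gc])
      show "- pi < pi" by simp
      show "Mean u (cmod (of_real r0 + of_real \<rho> * cis \<sigma>)) \<le> m" for \<sigma>
        using x1(2)[OF nK2[of \<sigma>]] by (simp add: m_def)
      show "0 \<in> {-pi..pi}" by simp
      have "cmod (of_real r0 + of_real \<rho> * cis 0) = r0 + \<rho>" using r0m \<rho>
        by (simp del: of_real_add add: of_real_add[symmetric])
      then show "Mean u (cmod (of_real r0 + of_real \<rho> * cis 0)) < m"
        using above[of "r0 + \<rho>"] \<rho> r0m by simp
    qed
    with ineq show ?thesis by simp
  qed
qed


lemma periodic_integral':
  fixes g :: "real \<Rightarrow> real"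
  assumes cont: "continuous_on UNIV g" and per: "\<And>x. g (x + 2 * pi) = g x"
    and al: "-2*pi \<le> \<alpha>" "\<alpha> \<le> 2 * pi"
  shows "integral {-pi..pi} (\<lambda>t. g (t + \<alpha>)) = integral {-pi..pi} g"
proof (cases "0 \<le> \<alpha>")
  case True then show ?thesis using periodic_integral[OF cont per] al by simp
next
  case False
  define g' where "g' t = g (t + \<alpha>)" for t
  have c': "continuous_on UNIV g'" unfolding g'_def
    by (rule continuous_on_compose2[OF cont]) (auto intro!: continuous_intros)
  have p': "g' (x + 2 * pi) = g' x" for x unfolding g'_def using per[of "x + \<alpha>"] by (simp add: algebra_simps)
  have "integral {-pi..pi} (\<lambda>t. g' (t + - \<alpha>)) = integral {-pi..pi} g'"
    using periodic_integral[OF c' p', of "-\<alpha>"] False al by simp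
  then show ?thesis by (simp add: g'_def[abs_def])
qed

lemma mean_value_01:
  assumes hol: "\<psi> holomorphic_on ball z \<delta>" and \<rho>: "0 < \<rho>" "\<rho> < \<delta>"
  shows "((\<lambda>t. \<psi> (z + of_real \<rho> * cis (2 * pi * t))) has_integral \<psi> z) {0..1}"
proof -
  have "cball z \<rho> \<subseteq> ball z \<delta>" using \<rho> by auto
  then have contf: "continuous_on (cball z \<rho>) \<psi>"
    using holomorphic_on_imp_continuous_on[OF hol] by (meson continuous_on_subset)
  have hb: "\<psi> holomorphic_on ball z \<rho>"
    by (rule holomorphic_on_subset[OF hol]) (use \<rho> in auto)
  note contf = contf hb
  have "((\<lambda>w. \<psi> w / (w - z)) has_contour_integral (2 * of_real pi * \<i> * \<psi> z)) (circlepath z \<rho>)"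
    by (rule Cauchy_integral_circlepath[OF contf]) (use \<rho> in simp)
  then have H: "((\<lambda>x. \<psi> (circlepath z \<rho> x) / (circlepath z \<rho> x - z) * vector_derivative (circlepath z \<rho>) (at x within {0..1}))
      has_integral (2 * of_real pi * \<i> * \<psi> z)) {0..1}"
    by (simp add: has_contour_integral_def)
  have eq: "\<psi> (circlepath z \<rho> x) / (circlepath z \<rho> x - z) * vector_derivative (circlepath z \<rho>) (at x within {0..1})
      = (2 * of_real pi * \<i>) * \<psi> (z + of_real \<rho> * cis (2 * pi * x))" if "x \<in> {0..1}" for x
  proof -
    have e: "exp (2 * of_real pi * \<i> * of_real x) = cis (2 * pi * x)"
      by (simp add: cis_conv_exp mult.commute mult.left_commute)
    have nz: "exp (2 * of_real pi * \<i> * of_real x) \<noteq> 0" by simp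
    have vd: "vector_derivative (circlepath z \<rho>) (at x within {0..1}) = 2 * pi * \<i> * \<rho> * exp(2 * of_real pi * \<i> * x)"
      using that by (simp add: vector_derivative_circlepath01)
    have cp: "circlepath z \<rho> x = z + \<rho> * exp(2 * of_real pi * \<i> * x)" by (simp add: circlepath)
    show ?thesis unfolding vd cp e using \<rho> by (simp add: field_simps)
  qed
  have "((\<lambda>x. (2 * of_real pi * \<i>) * \<psi> (z + of_real \<rho> * cis (2 * pi * x))) has_integral (2 * of_real pi * \<i> * \<psi> z)) {0..1}"
    using H by (subst (asm) has_integral_cong[OF eq]) simp
  then have "((\<lambda>x. (1 / (2 * of_real pi * \<i>)) * ((2 * of_real pi * \<i>) * \<psi> (z + of_real \<rho> * cis (2 * pi * x)))) has_integral
      (1 / (2 * of_real pi * \<i>)) * (2 * of_real pi * \<i> * \<psi> z)) {0..1}"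
    by (rule has_integral_mult_right)
  then show ?thesis by simp
qed

lemma mean_value_Re:
  assumes hol: "\<psi> holomorphic_on ball z \<delta>" and c: "cmod c < \<delta>"
  shows "integral {-pi..pi} (\<lambda>\<sigma>. Re (\<psi> (z + c * cis \<sigma>))) = 2 * pi * Re (\<psi> z)"
proof (cases "c = 0")
  case True then show ?thesis by simp
next
  case False
  define \<rho> where "\<rho> = cmod c"
  have \<rho>: "0 < \<rho>" "\<rho> < \<delta>" using False c by (auto simp: \<rho>_def)
  define h where "h \<sigma> = Re (\<psi> (z + of_real \<rho> * cis \<sigma>))" for \<sigma>
  have cb: "cball z \<rho> \<subseteq> ball z \<delta>" using \<rho> by auto
  have hc: "continuous_on UNIV h"
  proof -
    have "continuous_on UNIV (\<lambda>\<sigma>. \<psi> (z + of_real \<rho> * cis \<sigma>))"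
      by (rule continuous_on_compose2[OF holomorphic_on_imp_continuous_on[OF hol]])
         (use \<rho> in \<open>auto intro!: continuous_intros simp: dist_norm norm_mult\<close>)
    then show ?thesis unfolding h_def by (intro continuous_intros)
  qed
  have "cis (x + 2 * pi) = cis x" for x by (simp add: complex_eq_iff)
  then have hp: "h (x + 2 * pi) = h x" for x by (simp add: h_def)
  define \<alpha> where "\<alpha> = Arg c"
  have al: "-pi < \<alpha>" "\<alpha> \<le> pi" using Arg_bounded[of c] by (auto simp: \<alpha>_def)
  have cc: "c = of_real \<rho> * cis \<alpha>"
    using rcis_cmod_Arg[of c] by (simp add: \<rho>_def \<alpha>_def rcis_def)
  have "integral {-pi..pi} (\<lambda>\<sigma>. Re (\<psi> (z + c * cis \<sigma>))) = integral {-pi..pi} (\<lambda>\<sigma>. h (\<sigma> + \<alpha>))"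
    by (rule integral_cong) (simp add: h_def cc cis_mult[symmetric] mult_ac add.commute)
  also have "\<dots> = integral {-pi..pi} h" using periodic_integral'[OF hc hp] al by simp
  also have "\<dots> = integral {-pi..pi} (\<lambda>\<sigma>. h (\<sigma> + pi))" using periodic_integral'[OF hc hp, of pi] by simp
  also have "\<dots> = integral {0..2*pi} h"
    using integral_shift_Icc_real[of "-pi" pi h pi] by (simp add: o_def add.commute)
  also have "\<dots> = 2 * pi * Re (\<psi> z)"
  proof -
    have int: "h integrable_on {0..2*pi}"
      using hc by (intro integrable_continuous_real) (auto intro: continuous_on_subset)
    have "((\<lambda>x. h ((2*pi) * x)) has_integral (1 / \<bar>2*pi\<bar>) *\<^sub>R integral {0..2*pi} h) ((\<lambda>x. x / (2*pi)) ` {0..2*pi})"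
      by (rule has_integral_stretch_real[OF integrable_integral[OF int]]) simp
    moreover have "(\<lambda>x. x / (2*pi)) ` {0..2*pi} = {0..1}"
    proof -
      have "(\<lambda>x. x / (2*pi)) ` {0..2*pi} = (\<lambda>x. (1/(2*pi)) * x + 0) ` {0..2*pi}" by simp
      also have "\<dots> = {0..1}" by (subst image_affinity_atLeastAtMost) auto
      finally show ?thesis .
    qed
    ultimately have A: "((\<lambda>x. h ((2*pi) * x)) has_integral (1 / (2*pi)) * integral {0..2*pi} h) {0..1}"
      by simp
    have B: "((\<lambda>x. h ((2*pi) * x)) has_integral Re (\<psi> z)) {0..1}"
      using has_integral_linear[OF mean_value_01[OF hol \<rho>] bounded_linear_Re]
      by (simp add: o_def h_def)
    from has_integral_unique[OF A B] show ?thesis by (simp add: field_simps)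
  qed
  finally show ?thesis .
qed


lemma cs3_sq: "(a1*b1+a2*b2+a3*b3)^2 \<le> (a1^2+a2^2+a3^2)*(b1^2+b2^2+b3^2)" for a1 a2 a3 b1 b2 b3 :: real
proof -
  have "(a1^2+a2^2+a3^2)*(b1^2+b2^2+b3^2) - (a1*b1+a2*b2+a3*b3)^2 = (a1*b2-a2*b1)^2+(a1*b3-a3*b1)^2+(a2*b3-a3*b2)^2"
    by (simp add: power2_eq_square algebra_simps)
  moreover have "(a1*b2-a2*b1)^2+(a1*b3-a3*b1)^2+(a2*b3-a3*b2)^2 \<ge> 0" by simp
  ultimately show ?thesis by linarith
qed

lemma cs3: "a1*b1+a2*b2+a3*b3 \<le> sqrt (a1^2+a2^2+a3^2) * sqrt (b1^2+b2^2+b3^2)" for a1 a2 a3 b1 b2 b3 :: real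
  by (metis cs3_sq real_le_rsqrt real_sqrt_mult)

lemma ccs3: "cmod (cnj a * x + cnj b * y + of_real (e * e')) \<le> sqrt ((cmod a)^2 + (cmod b)^2 + e^2) * sqrt ((cmod x)^2 + (cmod y)^2 + e'^2)"
  if "e \<ge> 0" "e' \<ge> 0" for a b x y :: complex
proof -
  have "cmod (cnj a * x + cnj b * y + of_real (e * e')) \<le> cmod a * cmod x + cmod b * cmod y + e * e'"
  proof -
    have "cmod (cnj a * x + cnj b * y + of_real (e * e')) \<le> cmod (cnj a * x) + cmod (cnj b * y) + cmod (of_real (e * e') :: complex)"
      by (meson norm_triangle_ineq order_trans add_right_mono)
    also have "\<dots> = cmod a * cmod x + cmod b * cmod y + e * e'"
      using that by (simp add: norm_mult)
    finally show ?thesis .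
  qed
  also have "\<dots> \<le> sqrt ((cmod a)^2 + (cmod b)^2 + e^2) * sqrt ((cmod x)^2 + (cmod y)^2 + e'^2)"
    by (rule cs3)
  finally show ?thesis .
qed

lemma submean_eps:
  fixes F G :: "complex \<Rightarrow> complex"
  assumes hF: "F holomorphic_on ball 0 1" and hG: "G holomorphic_on ball 0 1"
    and e: "\<epsilon> > 0" and p: "p > 0" and s: "s < 1"
  defines "ue \<equiv> (\<lambda>z. ((cmod (F z))^2 + (cmod (G z))^2 + \<epsilon>) powr (p/2))"
  shows "\<exists>\<delta>>0. \<forall>z c. cmod z \<le> s \<longrightarrow> cmod c < \<delta> \<longrightarrow>
               2 * pi * ue z \<le> integral {-pi..pi} (\<lambda>\<sigma>. ue (z + c * cis \<sigma>))"
proof -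
  define s0 where "s0 = max s 0"
  define R where "R = (1 + s0) / 2"
  have s0: "0 \<le> s0" "s0 < 1" using s by (auto simp: s0_def)
  have R: "s0 < R" "R < 1" using s0 by (auto simp: R_def)
  define H where "H w = (F w, G w)" for w
  have contF: "continuous_on (ball 0 1) F" "continuous_on (ball 0 1) G"
    using hF hG by (auto intro: holomorphic_on_imp_continuous_on)
  have RS: "cball 0 R \<subseteq> ball 0 1" using R by auto
  have "continuous_on (cball 0 R) H" unfolding H_def
    using contF RS by (auto intro!: continuous_intros intro: continuous_on_subset)
  then have "uniformly_continuous_on (cball 0 R) H"
    by (rule compact_uniformly_continuous) simp
  then obtain \<delta>0 where \<delta>0: "\<delta>0 > 0" "\<And>x y. x \<in> cball 0 R \<Longrightarrow> y \<in> cball 0 R \<Longrightarrow> dist y x < \<delta>0 \<Longrightarrow> dist (H y) (H x) < sqrt \<epsilon>"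
    unfolding uniformly_continuous_on_def using e by (meson real_sqrt_gt_zero)
  define \<delta> where "\<delta> = min \<delta>0 ((1 - s0)/2)"
  have \<delta>: "\<delta> > 0" "\<delta> \<le> \<delta>0" "\<delta> \<le> (1 - s0)/2" using \<delta>0(1) s0 unfolding \<delta>_def min_def by auto
  have \<delta>R: "s0 + \<delta> \<le> R" using \<delta>(3) by (simp add: R_def)
  note \<delta> = \<delta> \<delta>R
  show ?thesis
  proof (intro exI[of _ \<delta>] conjI allI impI)
    show "\<delta> > 0" by fact
    fix z c assume z: "cmod z \<le> s" and c: "cmod c < \<delta>"
    have zs0: "cmod z \<le> s0" using z by (simp add: s0_def)
    have inR: "w \<in> cball 0 R" if "w \<in> ball z \<delta>" for w
    proof -
      have "cmod w \<le> cmod z + cmod (w - z)" by (metis add.commute diff_add_cancel norm_triangle_ineq)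
      also have "\<dots> < s0 + \<delta>" using zs0 that by (simp add: dist_norm norm_minus_commute)
      finally show ?thesis using \<delta> by simp
    qed
    have zR: "z \<in> cball 0 R" using inR[of z] \<delta> by simp
    have ball1: "ball z \<delta> \<subseteq> ball 0 1" using inR RS by blast
    define A where "A = F z"
    define B where "B = G z"
    define N where "N = sqrt ((cmod A)^2 + (cmod B)^2 + \<epsilon>)"
    have N2: "N^2 = (cmod A)^2 + (cmod B)^2 + \<epsilon>" using e by (simp add: N_def add_nonneg_nonneg)
    have Npos: "N > 0" using e by (simp add: N_def add_nonneg_pos)
    have Ne: "sqrt \<epsilon> \<le> N" unfolding N_def by (rule real_sqrt_le_mono) simp
    have NAB: "sqrt ((cmod A)^2 + (cmod B)^2 + 0^2) \<le> N" unfolding N_def by (rule real_sqrt_le_mono) (use e in simp)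
    define \<phi> where "\<phi> w = (cnj A * F w + cnj B * G w + of_real \<epsilon>) / of_real N" for w
    have phiz: "\<phi> z = of_real N"
    proof -
      have "cnj A * F z + cnj B * G z + of_real \<epsilon> = of_real (N^2)"
      proof -
        have "cnj A * F z = of_real ((cmod A)^2)" "cnj B * G z = of_real ((cmod B)^2)"
          by (simp_all only: A_def B_def complex_norm_square mult.commute)
        then show ?thesis unfolding N2 by simp
      qed
      then show ?thesis using Npos by (simp add: \<phi>_def power2_eq_square)
    qed
    have phidiff: "\<phi> w - of_real N = (cnj A * (F w - A) + cnj B * (G w - B) + of_real (0 * 0)) / of_real N" for w
      using phiz Npos by (simp add: \<phi>_def A_def B_def field_simps)
    have Re_pos: "Re (\<phi> w) > 0" if w: "w \<in> ball z \<delta>" for w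
    proof -
      have d: "dist (H w) (H z) < sqrt \<epsilon>"
        using \<delta>0(2)[OF zR inR[OF w]] w \<delta> by (simp add: dist_commute)
      have dd: "dist (H w) (H z) = sqrt ((cmod (F w - A))^2 + (cmod (G w - B))^2 + 0^2)"
        by (simp add: H_def dist_Pair_Pair A_def B_def dist_norm norm_Pair)
      have c1: "cmod (cnj A * (F w - A) + cnj B * (G w - B) + of_real (0 * 0)) \<le>
          sqrt ((cmod A)^2 + (cmod B)^2 + 0^2) * sqrt ((cmod (F w - A))^2 + (cmod (G w - B))^2 + 0^2)"
        by (rule ccs3) simp_all
      also have "\<dots> \<le> N * sqrt ((cmod (F w - A))^2 + (cmod (G w - B))^2 + 0^2)"
        by (rule mult_right_mono[OF NAB]) simp
      finally have c2: "cmod (cnj A * (F w - A) + cnj B * (G w - B) + of_real (0 * 0)) \<le> N * dist (H w) (H z)"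
        unfolding dd .
      have "cmod (\<phi> w - of_real N) = cmod (cnj A * (F w - A) + cnj B * (G w - B) + of_real (0 * 0)) / N"
        unfolding phidiff norm_divide using Npos by simp
      also have "\<dots> \<le> dist (H w) (H z)"
        using c2 Npos by (simp add: divide_le_eq mult.commute)
      finally have "cmod (\<phi> w - of_real N) \<le> dist (H w) (H z)" .
      then have "cmod (\<phi> w - of_real N) < N" using d Ne by linarith
      then have "N - Re (\<phi> w) < N" using abs_Re_le_cmod[of "\<phi> w - of_real N"] by simp
      then show ?thesis by simp
    qed
    have hphi: "\<phi> holomorphic_on ball z \<delta>"
      unfolding \<phi>_def using hF hG ball1 Npos
      by (auto intro!: holomorphic_intros intro: holomorphic_on_subset)
    define \<psi> where "\<psi> w = \<phi> w powr of_real p" for w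
    have hpsi: "\<psi> holomorphic_on ball z \<delta>"
      unfolding \<psi>_def
      by (intro holomorphic_intros hphi) (use Re_pos in \<open>fastforce simp: complex_nonpos_Reals_iff\<close>)
    have psiz: "\<psi> z = of_real (N powr p)"
      using Npos by (simp add: \<psi>_def phiz powr_of_real)
    have uez: "ue z = N powr p"
    proof -
      have "ue z = (N^2) powr (p/2)" by (simp add: ue_def N2 A_def B_def)
      also have "\<dots> = (N powr 2) powr (p/2)" using Npos by (simp add: powr_numeral)
      also have "\<dots> = N powr p" by (simp add: powr_powr)
      finally show ?thesis .
    qed
    have bound: "Re (\<psi> w) \<le> ue w" for w
    proof -
      have "Re (\<psi> w) \<le> cmod (\<psi> w)" by (rule complex_Re_le_cmod)
      also have "\<dots> = cmod (\<phi> w) powr p" by (simp add: \<psi>_def norm_powr_real_powr')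
      also have "\<dots> \<le> (sqrt ((cmod (F w))^2 + (cmod (G w))^2 + \<epsilon>)) powr p"
      proof (rule powr_mono2)
        have "cmod (cnj A * F w + cnj B * G w + of_real (sqrt \<epsilon> * sqrt \<epsilon>)) \<le> N * sqrt ((cmod (F w))^2 + (cmod (G w))^2 + (sqrt \<epsilon>)^2)"
          using ccs3[of "sqrt \<epsilon>" "sqrt \<epsilon>" A "F w" B "G w"] e by (simp add: N_def)
        then show "cmod (\<phi> w) \<le> sqrt ((cmod (F w))^2 + (cmod (G w))^2 + \<epsilon>)"
          using Npos e by (simp add: \<phi>_def norm_divide field_simps)
      qed (use p in auto)
      also have "\<dots> = ue w"
        unfolding ue_def using e by (simp add: powr_half_sqrt[symmetric] add_nonneg_nonneg powr_powr)
      finally show ?thesis .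
    qed
    have onball: "z + c * cis \<sigma> \<in> ball z \<delta>" for \<sigma> using c by (simp add: dist_norm norm_mult)
    have pos': "(cmod (F x))^2 + (cmod (G x))^2 + \<epsilon> \<noteq> 0" for x
      using e by (metis add_nonneg_pos less_irrefl zero_le_power2 add_nonneg_nonneg)
    have ue_cont: "continuous_on (ball 0 1) ue"
      unfolding ue_def using contF e
      by (intro continuous_intros) (auto simp: pos')
    have c1: "continuous_on {-pi..pi} (\<lambda>\<sigma>. Re (\<psi> (z + c * cis \<sigma>)))"
      by (intro continuous_intros continuous_on_compose2[OF holomorphic_on_imp_continuous_on[OF hpsi]]) (use onball in auto)
    have c2: "continuous_on {-pi..pi} (\<lambda>\<sigma>. ue (z + c * cis \<sigma>))"
      by (intro continuous_intros continuous_on_compose2[OF ue_cont]) (use onball ball1 in auto)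
    have "2 * pi * ue z = integral {-pi..pi} (\<lambda>\<sigma>. Re (\<psi> (z + c * cis \<sigma>)))"
      using mean_value_Re[OF hpsi c] by (simp add: psiz uez)
    also have "\<dots> \<le> integral {-pi..pi} (\<lambda>\<sigma>. ue (z + c * cis \<sigma>))"
      by (rule integral_le) (use integrable_continuous_real[OF c1] integrable_continuous_real[OF c2] bound in auto)
    finally show "2 * pi * ue z \<le> integral {-pi..pi} (\<lambda>\<sigma>. ue (z + c * cis \<sigma>))" .
  qed
qed


lemma mean_eps_limit:
  fixes F G :: "complex \<Rightarrow> complex"
  assumes cF: "continuous_on (ball 0 1) F" and cG: "continuous_on (ball 0 1) G"
    and p: "p > 0" and \<rho>: "0 \<le> \<rho>" "\<rho> < 1"
  defines "ue \<equiv> (\<lambda>k z. ((cmod (F z))^2 + (cmod (G z))^2 + 1 / real (Suc k)) powr (p/2))"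
    and "u0 \<equiv> (\<lambda>z. ((cmod (F z))^2 + (cmod (G z))^2) powr (p/2))"
  shows "(\<lambda>k. Mean (ue k) \<rho>) \<longlonglongrightarrow> Mean u0 \<rho>"
proof -
  define f where "f k t = ue k (of_real \<rho> * cis t)" for k t
  define g where "g t = u0 (of_real \<rho> * cis t)" for t
  have inb: "of_real \<rho> * cis t \<in> ball 0 1" for t using \<rho> by (simp add: norm_mult)
  have inb': "cmod (of_real \<rho> * cis t) < 1" for t using inb[of t] by simp
  have cFc1: "continuous_on UNIV (\<lambda>t. F (of_real \<rho> * cis t))"
    by (rule continuous_on_compose2[OF cF]) (auto intro!: continuous_intros simp: inb')
  have cFc2: "continuous_on UNIV (\<lambda>t. G (of_real \<rho> * cis t))"
    by (rule continuous_on_compose2[OF cG]) (auto intro!: continuous_intros simp: inb')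
  note cFc = cFc1 cFc2
  have pos': "(cmod (F x))^2 + (cmod (G x))^2 + 1 / (1 + real k) \<noteq> 0" for x k
    by (smt (verit) zero_le_power2 of_nat_0_le_iff divide_pos_pos)
  have fc: "continuous_on {-pi..pi} (f k)" for k
    unfolding f_def ue_def using cFc
    by (intro continuous_intros) (auto intro: continuous_on_subset simp: pos')
  have intf: "f k integrable_on {-pi..pi}" for k by (rule integrable_continuous_real[OF fc])
  have dec: "f (Suc k) t \<le> f k t" for k t
    unfolding f_def ue_def
    by (rule powr_mono2) (use p in \<open>auto simp: frac_le add_nonneg_nonneg\<close>)
  have lim: "(\<lambda>k. f k t) \<longlonglongrightarrow> g t" for t
  proof -
    have "(\<lambda>k. 1 / real (Suc k)) \<longlonglongrightarrow> 0" by (rule LIMSEQ_Suc[OF lim_inverse_n'])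
    then have "(\<lambda>k. (cmod (F (of_real \<rho> * cis t)))^2 + (cmod (G (of_real \<rho> * cis t)))^2 + 1 / real (Suc k))
        \<longlonglongrightarrow> (cmod (F (of_real \<rho> * cis t)))^2 + (cmod (G (of_real \<rho> * cis t)))^2 + 0"
      by (intro tendsto_intros)
    then have "(\<lambda>k. ((cmod (F (of_real \<rho> * cis t)))^2 + (cmod (G (of_real \<rho> * cis t)))^2 + 1 / real (Suc k)) powr (p/2))
        \<longlonglongrightarrow> ((cmod (F (of_real \<rho> * cis t)))^2 + (cmod (G (of_real \<rho> * cis t)))^2 + 0) powr (p/2)"
      by (rule tendsto_powr2[OF _ tendsto_const]) (use p in auto)
    then show ?thesis unfolding f_def g_def ue_def u0_def by simp
  qed
  have bnd: "bounded (range (\<lambda>k. integral {-pi..pi} (f k)))"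
  proof -
    have "\<bar>integral {-pi..pi} (f k)\<bar> \<le> integral {-pi..pi} (f 0)" for k
    proof -
      have nn: "0 \<le> integral {-pi..pi} (f k)"
        by (rule integral_nonneg[OF intf]) (simp add: f_def ue_def)
      have "f k t \<le> f 0 t" for t by (induction k) (auto intro: order_trans[OF dec])
      then have "integral {-pi..pi} (f k) \<le> integral {-pi..pi} (f 0)"
        by (intro integral_le intf) auto
      then show ?thesis using nn by simp
    qed
    then show ?thesis by (intro boundedI[where B="integral {-pi..pi} (f 0)"]) auto
  qed
  from monotone_convergence_decreasing[OF intf dec lim bnd]
  have "(\<lambda>k. integral {-pi..pi} (f k)) \<longlonglongrightarrow> integral {-pi..pi} g" by blast
  then show ?thesis by (simp add: Mean_def f_def[abs_def] g_def[abs_def])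
qed

lemma mono_FG:
  fixes F G :: "complex \<Rightarrow> complex"
  assumes hF: "F holomorphic_on ball 0 1" and hG: "G holomorphic_on ball 0 1"
    and p: "p > 0" and rs: "0 \<le> r" "r \<le> s" "s < 1"
  shows "Mean (\<lambda>z. ((cmod (F z))^2 + (cmod (G z))^2) powr (p/2)) r
       \<le> Mean (\<lambda>z. ((cmod (F z))^2 + (cmod (G z))^2) powr (p/2)) s"
proof -
  define ue where "ue k z = ((cmod (F z))^2 + (cmod (G z))^2 + 1 / real (Suc k)) powr (p/2)" for k z
  have cF: "continuous_on (ball 0 1) F" "continuous_on (ball 0 1) G"
    using hF hG by (auto intro: holomorphic_on_imp_continuous_on)
  have step: "Mean (ue k) r \<le> Mean (ue k) s" for k
  proof (rule submean_mono[OF _ _ rs])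
    have pos': "(cmod (F x))^2 + (cmod (G x))^2 + 1 / (1 + real k) \<noteq> 0" for x
      by (smt (verit) zero_le_power2 of_nat_0_le_iff divide_pos_pos)
    show "continuous_on (ball 0 1) (ue k)"
      unfolding ue_def using cF by (intro continuous_intros) (auto simp: pos')
    show "\<exists>\<delta>>0. \<forall>z c. cmod z \<le> s' \<longrightarrow> cmod c < \<delta> \<longrightarrow> 2 * pi * ue k z \<le> integral {- pi..pi} (\<lambda>\<sigma>. ue k (z + c * cis \<sigma>))"
      if "s' < 1" for s'
      unfolding ue_def by (rule submean_eps[OF hF hG _ p that]) simp
  qed
  have l1: "(\<lambda>k. Mean (ue k) r) \<longlonglongrightarrow> Mean (\<lambda>z. ((cmod (F z))^2 + (cmod (G z))^2) powr (p/2)) r"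
    unfolding ue_def by (rule mean_eps_limit[OF cF p]) (use rs in auto)
  have l2: "(\<lambda>k. Mean (ue k) s) \<longlonglongrightarrow> Mean (\<lambda>z. ((cmod (F z))^2 + (cmod (G z))^2) powr (p/2)) s"
    unfolding ue_def by (rule mean_eps_limit[OF cF p]) (use rs in auto)
  show ?thesis using LIMSEQ_le[OF l1 l2] step by blast
qed


context slice_rep
begin

definition FFc where "FFc w = (\<Sum>n. cnj (al n) * w ^ n)"

lemma sums_FFc: "cmod w < 1 \<Longrightarrow> (\<lambda>n. cnj (al n) * w ^ n) sums cnj (FF (cnj w))"
proof -
  assume w: "cmod w < 1"
  have "(\<lambda>n. al n * (cnj w) ^ n) sums FF (cnj w)" using w sums_main(1)[of "cnj w"] by simp
  then show ?thesis by (subst sums_cnj[symmetric]) simp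
qed

lemma FFc_eq: "cmod w < 1 \<Longrightarrow> FFc w = cnj (FF (cnj w))"
  using sums_FFc by (simp add: FFc_def sums_iff)

lemma hol_FF: "FF holomorphic_on ball 0 1"
  by (rule power_series_holomorphic[where a=al]) (use sums_main(1) in auto)

lemma hol_GG: "GG holomorphic_on ball 0 1"
  by (rule power_series_holomorphic[where a=be]) (use sums_main(2) in auto)

lemma hol_FFc: "FFc holomorphic_on ball 0 1"
proof (rule power_series_holomorphic[where a="\<lambda>n. cnj (al n)"])
  fix w :: complex assume "w \<in> ball 0 1"
  then have w: "cmod w < 1" by simp
  show "(\<lambda>n. cnj (al n) * (w - 0) ^ n) sums FFc w"
    using sums_FFc[OF w] FFc_eq[OF w] by simp
qed

lemma sqrt_powr: "x \<ge> 0 \<Longrightarrow> sqrt x powr p = x powr (p / 2)"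
  by (simp add: powr_half_sqrt[symmetric] powr_powr)

lemma norm_f_powr: "cmod w < 1 \<Longrightarrow> norm (f (pt w)) powr p = ((cmod (FF w))^2 + (cmod (GG w))^2) powr (p/2)"
  by (simp add: norm_f norm_Pair sqrt_powr)

lemma norm_fc_powr: "cmod w < 1 \<Longrightarrow>
   norm (\<Sum>n. qmult (qpow (pt w) n) (qconj (a n))) powr p = ((cmod (FFc w))^2 + (cmod (GG w))^2) powr (p/2)"
  by (simp add: norm_fc norm_Pair sqrt_powr FFc_eq)

end

lemma Lim_mono:
  fixes h :: "real \<Rightarrow> real"
  assumes mono: "\<And>x y. 0 < x \<Longrightarrow> x \<le> y \<Longrightarrow> y < 1 \<Longrightarrow> h x \<le> h y"
  shows "Lim (at_left 1) (\<lambda>r. ereal (h r)) = (SUP r\<in>{0<..<1}. ereal (h r))"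
proof (rule tendsto_Lim[OF trivial_limit_at_left_real], rule increasing_tendsto)
  show "\<forall>\<^sub>F r in at_left 1. ereal (h r) \<le> (SUP r\<in>{0<..<1}. ereal (h r))"
    by (rule eventually_at_leftI[of 0]) (auto intro: SUP_upper)
  fix x assume "x < (SUP r\<in>{0<..<1}. ereal (h r))"
  then obtain r0 where r0: "r0 \<in> {0<..<1}" "x < ereal (h r0)" by (auto simp: less_SUP_iff)
  show "\<forall>\<^sub>F r in at_left 1. x < ereal (h r)"
  proof (rule eventually_at_leftI[of r0])
    fix r assume "r \<in> {r0<..<1}"
    then have "h r0 \<le> h r" using r0 by (intro mono) auto
    then show "x < ereal (h r)" using r0 by (meson ereal_less_eq(3) less_le_trans)
  qed (use r0 in auto)
qed

lemma Mp_eq: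
  fixes g :: "quat \<Rightarrow> quat" and U :: "complex \<Rightarrow> real"
  assumes eq: "\<And>\<theta>. norm (g (r *\<^sub>R qexpI I \<theta>)) powr p = U (of_real r * cis \<theta>)"
    and cU: "continuous_on {-pi..pi} (\<lambda>\<theta>. U (of_real r * cis \<theta>))"
  shows "Mp p g I r = ((1 / (2 * pi)) * Mean U r) powr (1 / p)"
proof -
  have "(LBINT \<theta>=-pi..pi. norm (g (r *\<^sub>R qexpI I \<theta>)) powr p) = (LBINT \<theta>=-pi..pi. U (of_real r * cis \<theta>))"
    by (simp add: eq)
  also have "\<dots> = integral {-pi..pi} (\<lambda>\<theta>. U (of_real r * cis \<theta>))"
    by (rule interval_integral_eq_integral) (use borel_integrable_atLeastAtMost'[OF cU] in auto)
  finally show ?thesis by (simp add: Mp_def Mean_def)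
qed


lemma cont_U:
  fixes F G :: "complex \<Rightarrow> complex"
  assumes hF: "F holomorphic_on ball 0 1" and hG: "G holomorphic_on ball 0 1"
    and p: "p > 0" and r: "0 \<le> r" "r < 1"
  shows "continuous_on {-pi..pi} (\<lambda>t. ((cmod (F (of_real r * cis t)))^2 + (cmod (G (of_real r * cis t)))^2) powr (p/2))"
proof -
  have cF: "continuous_on (ball 0 1) F" "continuous_on (ball 0 1) G"
    using hF hG by (auto intro: holomorphic_on_imp_continuous_on)
  have inb': "cmod (of_real r * cis t) < 1" for t using r by (simp add: norm_mult)
  have c1: "continuous_on {-pi..pi} (\<lambda>t. F (of_real r * cis t))"
    by (rule continuous_on_compose2[OF cF(1)]) (auto intro!: continuous_intros simp: inb')
  have c2: "continuous_on {-pi..pi} (\<lambda>t. G (of_real r * cis t))"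
    by (rule continuous_on_compose2[OF cF(2)]) (auto intro!: continuous_intros simp: inb')
  show ?thesis
    by (rule continuous_on_powr') (use c1 c2 p in \<open>auto intro!: continuous_intros add_nonneg_nonneg\<close>)
qed

lemma slice_point:
  assumes "I \<in> qS"
  shows "\<exists>u. norm u = 1 \<and> (\<forall>r \<theta>. r *\<^sub>R qexpI I \<theta> = qphi (qconj u) (of_real r * cis \<theta>, 0))"
proof -
  obtain u where u: "norm u = 1" "qphi u I = qi"
    using pure_unit_rot qS_pure_unit[OF assms] by blast
  have I: "qphi (qconj u) qi = I" using qphi_inv[OF u(1), of I] u(2) by simp
  have nu: "norm (qconj u) = 1" using u by simp
  have "(of_real r * cis \<theta>, 0) = r *\<^sub>R (cos \<theta> *\<^sub>R qone + sin \<theta> *\<^sub>R qi)" for r \<theta>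
    by (simp add: qone_def qi_def prod_eq_iff complex_eq_iff)
  then have "qphi (qconj u) (of_real r * cis \<theta>, 0) = r *\<^sub>R qexpI I \<theta>" for r \<theta>
    using qphi_one[OF nu] I by (simp add: qexpI_def)
  then show ?thesis using u by metis
qed

lemma powr_sum_bound:
  fixes A B X1 X2 q :: real
  assumes "0 \<le> A" "A \<le> X1" "0 \<le> B" "B \<le> X2" "q > 0"
  shows "(A + B) powr q \<le> 2 powr q * (X1 powr q + X2 powr q)"
proof (cases "X1 \<le> X2")
  case True
  have "(A + B) powr q \<le> (2 * X2) powr q" using assms True by (intro powr_mono2) auto
  also have "\<dots> = 2 powr q * X2 powr q" using assms by (simp add: powr_mult)
  also have "\<dots> \<le> 2 powr q * (X1 powr q + X2 powr q)" by (intro mult_left_mono) auto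
  finally show ?thesis .
next
  case False
  have "(A + B) powr q \<le> (2 * X1) powr q" using assms False by (intro powr_mono2) auto
  also have "\<dots> = 2 powr q * X1 powr q" using assms False by (simp add: powr_mult)
  also have "\<dots> \<le> 2 powr q * (X1 powr q + X2 powr q)" by (intro mult_left_mono) auto
  finally show ?thesis .
qed

lemma per_slice:
  assumes coeffs: "has_coeffs f a" and I: "I \<in> qS" and p: "p > 0"
  defines "fc \<equiv> (\<lambda>q. \<Sum>n. qmult (qpow q n) (qconj (a n)))"
    and "C \<equiv> (2 * 2 powr (p/2) :: real) powr (1/p)"
  shows "\<And>x y. 0 < x \<Longrightarrow> x \<le> y \<Longrightarrow> y < 1 \<Longrightarrow> Mp p f I x \<le> Mp p f I y"
    and "\<And>x y. 0 < x \<Longrightarrow> x \<le> y \<Longrightarrow> y < 1 \<Longrightarrow> Mp p fc I x \<le> Mp p fc I y"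
    and "\<And>r. 0 < r \<Longrightarrow> r < 1 \<Longrightarrow> Mp p fc I r \<le> C * Mp p f I r"
proof -
  obtain u where u: "norm u = 1" "\<And>r \<theta>. r *\<^sub>R qexpI I \<theta> = qphi (qconj u) (of_real r * cis \<theta>, 0)"
    using slice_point[OF I] by blast
  interpret S: slice_rep f a u by unfold_locales (use coeffs u in auto)
  have ptq: "r *\<^sub>R qexpI I \<theta> = S.pt (of_real r * cis \<theta>)" for r \<theta> by (simp add: u(2) S.pt_def)
  define Uf where "Uf z = ((cmod (S.FF z))^2 + (cmod (S.GG z))^2) powr (p/2)" for z
  define Uc where "Uc z = ((cmod (S.FFc z))^2 + (cmod (S.GG z))^2) powr (p/2)" for z
  have inb: "cmod (of_real r * cis \<theta>) < 1" if "0 \<le> r" "r < 1" for r \<theta> using that by (simp add: norm_mult)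
  have Mpf: "Mp p f I r = ((1 / (2 * pi)) * Mean Uf r) powr (1 / p)" if r: "0 \<le> r" "r < 1" for r
    by (rule Mp_eq) (use cont_U[OF S.hol_FF S.hol_GG p r] in \<open>simp_all add: ptq S.norm_f_powr[OF inb[OF r]] Uf_def\<close>)
  have Mpc: "Mp p fc I r = ((1 / (2 * pi)) * Mean Uc r) powr (1 / p)" if r: "0 \<le> r" "r < 1" for r
    by (rule Mp_eq) (use cont_U[OF S.hol_FFc S.hol_GG p r] in \<open>simp_all add: ptq fc_def S.norm_fc_powr[OF inb[OF r]] Uc_def\<close>)
  have Mnn: "0 \<le> Mean U r" if "\<And>z. U z \<ge> 0" "continuous_on {-pi..pi} (\<lambda>t. U (of_real r * cis t))" for U r
    unfolding Mean_def using that by (intro integral_nonneg integrable_continuous_real) auto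
  have monoM: "Mp p g I x \<le> Mp p g I y"
    if "0 < x" "x \<le> y" "y < 1" and Mg: "\<And>r. 0 \<le> r \<Longrightarrow> r < 1 \<Longrightarrow> Mp p g I r = ((1 / (2 * pi)) * Mean U r) powr (1 / p)"
      and monU: "Mean U x \<le> Mean U y" and nn: "0 \<le> Mean U x" for g U x y
  proof -
    have "((1 / (2 * pi)) * Mean U x) powr (1 / p) \<le> ((1 / (2 * pi)) * Mean U y) powr (1 / p)"
      using monU nn p by (intro powr_mono2) (auto simp: divide_right_mono)
    then show ?thesis using Mg that by simp
  qed
  show "Mp p f I x \<le> Mp p f I y" if "0 < x" "x \<le> y" "y < 1" for x y
    by (rule monoM[OF that Mpf]) (use that mono_FG[OF S.hol_FF S.hol_GG p, of x y] Mnn[of Uf x] cont_U[OF S.hol_FF S.hol_GG p, of x]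
         in \<open>auto simp: Uf_def[abs_def]\<close>)
  show "Mp p fc I x \<le> Mp p fc I y" if "0 < x" "x \<le> y" "y < 1" for x y
    by (rule monoM[OF that Mpc]) (use that mono_FG[OF S.hol_FFc S.hol_GG p, of x y] Mnn[of Uc x] cont_U[OF S.hol_FFc S.hol_GG p, of x]
         in \<open>auto simp: Uc_def[abs_def]\<close>)
  show "Mp p fc I r \<le> C * Mp p f I r" if r: "0 < r" "r < 1" for r
  proof -
    have r': "0 \<le> r" "r < 1" using r by auto
    have cf: "continuous_on {-pi..pi} (\<lambda>t. Uf (of_real r * cis t))"
      using cont_U[OF S.hol_FF S.hol_GG p r'] by (simp add: Uf_def)
    have cc: "continuous_on {-pi..pi} (\<lambda>t. Uc (of_real r * cis t))"
      using cont_U[OF S.hol_FFc S.hol_GG p r'] by (simp add: Uc_def)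
    have cf': "continuous_on {-pi..pi} (\<lambda>t. Uf (of_real r * cis (-t)))"
      by (rule continuous_on_compose2[OF cf]) (auto intro!: continuous_intros)
    have pt_bound: "Uc (of_real r * cis t) \<le> 2 powr (p/2) * (Uf (of_real r * cis (-t)) + Uf (of_real r * cis t))" for t
    proof -
      have c: "cnj (of_real r * cis t) = of_real r * cis (-t)" by (simp add: cis_cnj)
      show ?thesis unfolding Uc_def Uf_def S.FFc_eq[OF inb[OF r']] c
        by (rule powr_sum_bound) (use p in auto)
    qed
    have "Mean Uc r \<le> integral {-pi..pi} (\<lambda>t. 2 powr (p/2) * (Uf (of_real r * cis (-t)) + Uf (of_real r * cis t)))"
      unfolding Mean_def
      by (rule integral_le) (use pt_bound integrable_continuous_real[OF cc] in \<open>auto intro!: integrable_continuous_real continuous_intros cf cf'\<close>)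
    also have "\<dots> = 2 powr (p/2) * (integral {-pi..pi} (\<lambda>t. Uf (of_real r * cis (-t))) + Mean Uf r)"
      unfolding Mean_def
      by (simp add: integral_add integrable_continuous_real[OF cf] integrable_continuous_real[OF cf'])
    also have "integral {-pi..pi} (\<lambda>t. Uf (of_real r * cis (-t))) = Mean Uf r"
      unfolding Mean_def using Henstock_Kurzweil_Integration.integral_reflect_real[of pi "-pi" "\<lambda>t. Uf (of_real r * cis t)"]
      by simp
    finally have MM: "Mean Uc r \<le> (2 * 2 powr (p/2)) * Mean Uf r" by simp
    have nnf: "0 \<le> Mean Uf r" by (rule Mnn) (use cf in \<open>auto simp: Uf_def[abs_def]\<close>)
    have nnc: "0 \<le> Mean Uc r" by (rule Mnn) (use cc in \<open>auto simp: Uc_def[abs_def]\<close>)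
    have "Mp p fc I r = ((1 / (2 * pi)) * Mean Uc r) powr (1 / p)" using Mpc[OF r'] .
    also have "\<dots> \<le> ((2 * 2 powr (p/2)) * ((1 / (2 * pi)) * Mean Uf r)) powr (1 / p)"
      using MM nnc p by (intro powr_mono2) (auto simp: field_simps)
    also have "\<dots> = C * Mp p f I r"
      unfolding Mpf[OF r'] C_def by (rule powr_mult)
    finally show ?thesis .
  qed
qed


lemma ereal_bound: "(x::ereal) < \<infinity> \<Longrightarrow> \<exists>b. x \<le> ereal b"
  by (cases x) auto

lemma repr_point: "\<exists>u w. norm u = 1 \<and> q = qphi (qconj u) (w, 0) \<and> cmod w = norm q"
proof -
  obtain u w where uw: "norm u = 1" "qphi u q = (w, 0)" using quat_to_complex by blast
  have "q = qphi (qconj u) (w, 0)" using qphi_inv[OF uw(1), of q] uw(2) by simp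
  moreover have "cmod w = norm q" using norm_qphi[OF uw(1), of q] uw(2) by (simp add: norm_Pair)
  ultimately show ?thesis using uw(1) by blast
qed

theorem mainTheorem4:
  fixes p :: ereal and f :: "quat \<Rightarrow> quat"
  assumes "0 < p"
    and "f \<in> hardy_space p"
  shows "regular_conj f \<in> hardy_space p"
proof -
  have sr: "slice_regular f" and hn: "hardy_norm p f < \<infinity>" using assms(2) by (auto simp: hardy_space_def)
  define a where "a = (SOME a. has_coeffs f a)"
  have coeffs: "has_coeffs f a" using sr unfolding slice_regular_def a_def by (rule someI_ex)
  define fc where "fc = (\<lambda>q. \<Sum>n. qmult (qpow q n) (qconj (a n)))"
  have rc: "regular_conj f = fc" by (simp add: regular_conj_def a_def fc_def Let_def)
  have sumfc: "(\<lambda>n. qmult (qpow q n) (qconj (a n))) sums fc q" if q: "q \<in> qB" for q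
  proof -
    obtain u w where uw: "norm u = 1" "q = qphi (qconj u) (w, 0)" "cmod w = norm q"
      using repr_point by blast
    interpret S: slice_rep f a u by unfold_locales (use coeffs uw in auto)
    have qpt: "q = S.pt w" by (simp add: S.pt_def uw(2))
    have "cmod w < 1" using q uw(3) by (simp add: qB_def)
    from S.conj_sums[OF this] have "summable (\<lambda>n. qmult (qpow q n) (qconj (a n)))"
      by (simp add: qpt sums_iff)
    then show ?thesis by (simp add: fc_def summable_sums)
  qed
  have "has_coeffs fc (\<lambda>n. qconj (a n))" unfolding has_coeffs_def using sumfc by simp
  then have srfc: "slice_regular fc" unfolding slice_regular_def by blast
  have hfc: "hardy_norm p fc < \<infinity>"
  proof (cases "p = \<infinity>")
    case True
    have "(SUP q\<in>qB. ereal (norm (f q))) < \<infinity>" using hn True by (simp add: hardy_norm_def)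
    then obtain b where b: "(SUP q\<in>qB. ereal (norm (f q))) \<le> ereal b" using ereal_bound by blast
    have fb: "norm (f q) \<le> b" if "q \<in> qB" for q
      using order_trans[OF SUP_upper[OF that] b] by simp
    have "norm (fc q) \<le> 2 * b" if q: "q \<in> qB" for q
    proof -
      obtain u w where uw: "norm u = 1" "q = qphi (qconj u) (w, 0)" "cmod w = norm q"
        using repr_point by blast
      interpret S: slice_rep f a u by unfold_locales (use coeffs uw in auto)
      have qpt: "q = S.pt w" by (simp add: S.pt_def uw(2))
      have w: "cmod w < 1" using q uw(3) by (simp add: qB_def)
      have w': "cmod (cnj w) < 1" using w by simp
      have "norm (fc q) = norm (S.FF (cnj w), S.GG w)" using S.norm_fc[OF w] by (simp add: fc_def qpt)
      also have "\<dots> \<le> cmod (S.FF (cnj w)) + cmod (S.GG w)" by (rule norm_Pair_le)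
      also have "cmod (S.FF (cnj w)) \<le> norm (f (S.pt (cnj w)))"
        using S.norm_f[OF w'] norm_fst_le[of "S.FF (cnj w)" "S.GG (cnj w)"] by simp
      also have "\<dots> \<le> b" using fb w' by (simp add: qB_def S.norm_pt)
      also have "cmod (S.GG w) \<le> norm (f q)"
        using S.norm_f[OF w] norm_snd_le[of "S.GG w" "S.FF w"] by (simp add: qpt)
      also have "\<dots> \<le> b" using fb q by simp
      finally show ?thesis by simp
    qed
    then have "(SUP q\<in>qB. ereal (norm (fc q))) \<le> ereal (2 * b)" by (intro SUP_least) auto
    then have "(SUP q\<in>qB. ereal (norm (fc q))) < \<infinity>" by (rule le_less_trans) simp
    then show ?thesis using True by (simp add: hardy_norm_def)
  next
    case False
    define p' where "p' = real_of_ereal p"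
    have p': "p' > 0" using assms(1) False by (cases p) (auto simp: p'_def)
    define C where "C = (2 * 2 powr (p'/2) :: real) powr (1/p')"
    have C: "C \<ge> 0" by (simp add: C_def)
    have hn': "(SUP I\<in>qS. Lim (at_left (1::real)) (\<lambda>r. ereal (Mp p' f I r))) < \<infinity>"
      using hn False by (simp add: hardy_norm_def p'_def)
    then obtain b where b: "(SUP I\<in>qS. Lim (at_left (1::real)) (\<lambda>r. ereal (Mp p' f I r))) \<le> ereal b"
      using ereal_bound by blast
    have each: "Lim (at_left (1::real)) (\<lambda>r. ereal (Mp p' fc I r)) \<le> ereal (C * b)" if I: "I \<in> qS" for I
    proof -
      note ps = per_slice[OF coeffs I p', folded fc_def C_def]
      have Lf: "Lim (at_left (1::real)) (\<lambda>r. ereal (Mp p' f I r)) = (SUP r\<in>{0<..<1}. ereal (Mp p' f I r))"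
        by (rule Lim_mono) (rule ps(1))
      have Lc: "Lim (at_left (1::real)) (\<lambda>r. ereal (Mp p' fc I r)) = (SUP r\<in>{0<..<1}. ereal (Mp p' fc I r))"
        by (rule Lim_mono) (rule ps(2))
      have fb: "Mp p' f I r \<le> b" if "r \<in> {0<..<1}" for r
      proof -
        have "ereal (Mp p' f I r) \<le> Lim (at_left (1::real)) (\<lambda>r. ereal (Mp p' f I r))"
          unfolding Lf using that by (rule SUP_upper)
        also have "\<dots> \<le> ereal b" using order_trans[OF SUP_upper[OF I] b] .
        finally show ?thesis by simp
      qed
      have "Mp p' fc I r \<le> C * b" if "r \<in> {0<..<1}" for r
      proof -
        have "Mp p' fc I r \<le> C * Mp p' f I r" using ps(3) that by simp
        also have "\<dots> \<le> C * b" using fb[OF that] C by (rule mult_left_mono)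
        finally show ?thesis .
      qed
      then show ?thesis unfolding Lc by (intro SUP_least) auto
    qed
    have "(SUP I\<in>qS. Lim (at_left (1::real)) (\<lambda>r. ereal (Mp p' fc I r))) \<le> ereal (C * b)"
      using each by (intro SUP_least) auto
    then have "(SUP I\<in>qS. Lim (at_left (1::real)) (\<lambda>r. ereal (Mp p' fc I r))) < \<infinity>" by (rule le_less_trans) simp
    then show ?thesis using False by (simp add: hardy_norm_def p'_def)
  qed
  show ?thesis using srfc hfc rc by (simp add: hardy_space_def)
qed


end
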